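(* Let $1\le\ell\le r$ and let $\mathscr I=[I_0,I_1,\dots,I_\ell]$ be an ideal of $\Omega_{H_\ell}$ with $I_0=p\mathbb{Z}$. Then for each $1\le i\le\ell$: (1) $I_i=S(I_{i-1})$ or $I_i=L(I_{i-1})$; and (2) $I_i=J_{i,0}(p^{k+1})$ for some $0\le k\le i$.
   Context: Fix a prime $p$ and an integer $r\ge0$. For $0\le k\le r$ let $R_k$ be the commutative ring which is free as a $\mathbb{Z}$-module with basis $X_{k,0},\dots,X_{k,k}$ and multiplication $X_{k,i}X_{k,j}=p^{k-\max(i,j)}X_{k,\min(i,j)}$; thus $X_{k,k}=1$, and an integer $n$ is identified with $nX_{k,k}$. For $0\le k\le\ell\le r$ define: the additive map $\mathrm{ind}^\ell_k:R_k\to R_\ell$, $X_{k,i}\mapsto X_{\ell,i}$; the ring homomorphism $\mathrm{res}^\ell_k:R_\ell\to R_k$, $\mathrm{res}^\ell_k(X_{\ell,i})=p^{\ell-k}X_{k,i}$ if $i\le k$ and $=p^{\ell-i}$ if $i\ge k$; and the multiplicative map $\mathrm{jnd}^\ell_k:R_k\to R_\ell$, $$\mathrm{jnd}^\ell_k\Big(\sum_{i=0}^k m_iX_{k,i}\Big)=m_kX_{\ell,\ell}+\sum_{k\le i<\ell}\frac{m_k^{p^{\ell-i}}-m_k^{p^{\ell-i-1}}}{p^{\ell-i}}X_{\ell,i}+\sum_{0\le i<k}\frac{(\sum_{s=i}^k m_sp^{k-s})^{p^{\ell-k}}-(\sum_{s=i+1}^k m_sp^{k-s})^{p^{\ell-k}}}{p^{\ell-i}}X_{\ell,i}$$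 ($m_i\in\mathbb{Z}$). An ideal of $\Omega_{H_n}$ is a sequence $[I_0,\dots,I_n]$ of ideals $I_k\subseteq R_k$ such that for every $1\le k\le n$: $\mathrm{ind}^k_{k-1}(I_{k-1})\subseteq I_k$, $\mathrm{res}^k_{k-1}(I_k)\subseteq I_{k-1}$, $\mathrm{jnd}^k_{k-1}(I_{k-1})\subseteq I_k$. For an ideal $I\subseteq R_{i-1}$: $L(I)=(\mathrm{res}^i_{i-1})^{-1}(I)\subseteq R_i$, and $S(I)$ is the ideal of $R_i$ generated by $\mathrm{ind}^i_{i-1}(I)\cup\mathrm{jnd}^i_{i-1}(I)$. For $0\le j\le i$, $F_{i,j}=X_{i,j}-p^{i-j}$; for $x\in\mathbb{Z}$ and $i\ge1$, $J_{i,0}(x)\subseteq R_i$ is the ideal generated by $x,F_{i,0},\dots,F_{i,i-1}$. *)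

theory Defs
  imports Main "HOL-Computational_Algebra.Primes"
begin

text \<open>Elements of R_k are represented by their coefficient functions
  m :: nat \<Rightarrow> int w.r.t. the basis X_{k,0},...,X_{k,k}, i.e. m i is the
  coefficient of X_{k,i}; coefficients with index > k are zero.\<close>

type_synonym elt = "nat \<Rightarrow> int"

definition carrierR :: "nat \<Rightarrow> elt set" where
  "carrierR k = {m. \<forall>i>k. m i = 0}"

definition Xb :: "nat \<Rightarrow> nat \<Rightarrow> elt" where
  "Xb k i = (\<lambda>j. if j = i then 1 else 0)"

definition addR :: "elt \<Rightarrow> elt \<Rightarrow> elt" where
  "addR a b = (\<lambda>j. a j + b j)"

definition smulR :: "int \<Rightarrow> elt \<Rightarrow> elt" where
  "smulR c a = (\<lambda>j. c * a j)"

text \<open>Multiplication in R_k: X_{k,i} X_{k,j} = p^{k - max i j} X_{k, min i j}.\<close>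
definition mulR :: "int \<Rightarrow> nat \<Rightarrow> elt \<Rightarrow> elt \<Rightarrow> elt" where
  "mulR p k a b = (\<lambda>t. if t \<le> k then
      (\<Sum>i\<le>k. \<Sum>j\<le>k. if min i j = t then a i * b j * p ^ (k - max i j) else 0)
    else 0)"

text \<open>An integer n is identified with n X_{k,k}.\<close>
definition intR :: "nat \<Rightarrow> int \<Rightarrow> elt" where
  "intR k n = smulR n (Xb k k)"

definition ideal_R :: "int \<Rightarrow> nat \<Rightarrow> elt set \<Rightarrow> bool" where
  "ideal_R p k I \<longleftrightarrow> I \<subseteq> carrierR k \<and> (\<lambda>_. 0) \<in> I \<and>
     (\<forall>a\<in>I. \<forall>b\<in>I. addR a b \<in> I) \<and> (\<forall>a\<in>I. smulR (-1) a \<in> I) \<and>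
     (\<forall>r\<in>carrierR k. \<forall>a\<in>I. mulR p k r a \<in> I)"

definition gen_ideal :: "int \<Rightarrow> nat \<Rightarrow> elt set \<Rightarrow> elt set" where
  "gen_ideal p k G = \<Inter>{J. ideal_R p k J \<and> G \<subseteq> J}"

text \<open>ind^l_k : X_{k,i} \<mapsto> X_{l,i}; on coefficient functions this is the identity.\<close>
definition indR :: "nat \<Rightarrow> nat \<Rightarrow> elt \<Rightarrow> elt" where
  "indR l k m = m"

text \<open>res^l_k(X_{l,i}) = p^{l-k} X_{k,i} if i \<le> k, and p^{l-i} (= p^{l-i} X_{k,k}) if i \<ge> k;
  extended additively.\<close>
definition resR :: "int \<Rightarrow> nat \<Rightarrow> nat \<Rightarrow> elt \<Rightarrow> elt" where
  "resR p l k m = (\<lambda>t. if t < k then p ^ (l - k) * m t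
      else if t = k then (\<Sum>i\<in>{k..l}. m i * p ^ (l - i)) else 0)"

definition jndR :: "int \<Rightarrow> nat \<Rightarrow> nat \<Rightarrow> elt \<Rightarrow> elt" where
  "jndR p l k m = (\<lambda>i.
     if i = l then m k
     else if k \<le> i \<and> i < l then
       (m k ^ (nat p ^ (l - i)) - m k ^ (nat p ^ (l - i - 1))) div p ^ (l - i)
     else if i < k then
       ((\<Sum>s\<in>{i..k}. m s * p ^ (k - s)) ^ (nat p ^ (l - k))
        - (\<Sum>s\<in>{i+1..k}. m s * p ^ (k - s)) ^ (nat p ^ (l - k))) div p ^ (l - i)
     else 0)"

definition omega_ideal :: "int \<Rightarrow> nat \<Rightarrow> (nat \<Rightarrow> elt set) \<Rightarrow> bool" where
  "omega_ideal p n I \<longleftrightarrow> (\<forall>k\<le>n. ideal_R p k (I k)) \<and>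
     (\<forall>k\<in>{1..n}. indR k (k-1) ` I (k-1) \<subseteq> I k \<and>
                 resR p k (k-1) ` I k \<subseteq> I (k-1) \<and>
                 jndR p k (k-1) ` I (k-1) \<subseteq> I k)"

definition Lop :: "int \<Rightarrow> nat \<Rightarrow> elt set \<Rightarrow> elt set" where
  "Lop p i I = {x \<in> carrierR i. resR p i (i-1) x \<in> I}"

definition Sop :: "int \<Rightarrow> nat \<Rightarrow> elt set \<Rightarrow> elt set" where
  "Sop p i I = gen_ideal p i (indR i (i-1) ` I \<union> jndR p i (i-1) ` I)"

definition Fel :: "int \<Rightarrow> nat \<Rightarrow> nat \<Rightarrow> elt" where
  "Fel p i j = addR (Xb i j) (intR i (- (p ^ (i - j))))"

definition J0 :: "int \<Rightarrow> nat \<Rightarrow> int \<Rightarrow> elt set" where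
  "J0 p i x = gen_ideal p i ({intR i x} \<union> {Fel p i j | j. j < i})"

definition pZ :: "int \<Rightarrow> elt set" where
  "pZ p = {intR 0 (p * z) | z. True}"

end

theory Submission
  imports Defs
begin

definition phi :: "int \<Rightarrow> nat \<Rightarrow> elt \<Rightarrow> int" where
  "phi p i a = (\<Sum>j\<le>i. a j * p^(i-j))"

definition Jset :: "int \<Rightarrow> nat \<Rightarrow> int \<Rightarrow> elt set" where
  "Jset p i x = {a \<in> carrierR i. x dvd phi p i a}"

lemma ideal_add: "ideal_R p k K \<Longrightarrow> a \<in> K \<Longrightarrow> b \<in> K \<Longrightarrow> addR a b \<in> K"
  by (simp add: ideal_R_def)
lemma ideal_zero: "ideal_R p k K \<Longrightarrow> (\<lambda>_. 0) \<in> K"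
  by (simp add: ideal_R_def)
lemma ideal_neg: "ideal_R p k K \<Longrightarrow> a \<in> K \<Longrightarrow> smulR (-1) a \<in> K"
  by (simp add: ideal_R_def)
lemma ideal_sub: "ideal_R p k K \<Longrightarrow> a \<in> K \<Longrightarrow> K \<subseteq> carrierR k"
  by (simp add: ideal_R_def)

lemma ideal_smul_nat: assumes "ideal_R p k K" "a \<in> K" shows "smulR (int n) a \<in> K"
proof (induction n)
  case 0
  have "smulR (int 0) a = (\<lambda>_. 0)" by (simp add: smulR_def)
  then show ?case using ideal_zero[OF assms(1)] by simp
next
  case (Suc n)
  have "smulR (int (Suc n)) a = addR (smulR (int n) a) a"
    by (simp add: smulR_def addR_def fun_eq_iff algebra_simps)
  then show ?case using ideal_add[OF assms(1) Suc assms(2)] by simp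
qed

lemma ideal_smul: assumes "ideal_R p k K" "a \<in> K" shows "smulR c a \<in> K"
proof (cases "c \<ge> 0")
  case True
  then have "c = int (nat c)" by simp
  then show ?thesis using ideal_smul_nat[OF assms, of "nat c"] by metis
next
  case False
  then have "smulR c a = smulR (-1) (smulR (int (nat (-c))) a)"
    by (simp add: smulR_def fun_eq_iff)
  moreover have "int (nat (-c)) = -c" using False by simp
  ultimately show ?thesis using ideal_neg[OF assms(1) ideal_smul_nat[OF assms, of "nat (-c)"]] by simp
qed

lemma ideal_sum: assumes "ideal_R p k K" "finite A" "\<And>j. j \<in> A \<Longrightarrow> v j \<in> K"
  shows "(\<lambda>t. \<Sum>j\<in>A. v j t) \<in> K"
  using assms(2,3)
proof (induction A rule: finite_induct)
  case empty
  then show ?case using ideal_zero[OF assms(1)] by simp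
next
  case (insert x F)
  have "(\<lambda>t. \<Sum>j\<in>insert x F. v j t) = addR (v x) (\<lambda>t. \<Sum>j\<in>F. v j t)"
    using insert(1,2) by (simp add: addR_def fun_eq_iff)
  then show ?case using ideal_add[OF assms(1)] insert by simp
qed

lemma carrier_ideal: "ideal_R p k (carrierR k)"
  by (auto simp: ideal_R_def carrierR_def addR_def smulR_def mulR_def)

lemma gen_ideal_least: "ideal_R p k K \<Longrightarrow> G \<subseteq> K \<Longrightarrow> gen_ideal p k G \<subseteq> K"
  unfolding gen_ideal_def by blast

lemma gen_ideal_gen: "G \<subseteq> gen_ideal p k G"
  unfolding gen_ideal_def by blast

lemma gen_ideal_ideal: assumes "G \<subseteq> carrierR k" shows "ideal_R p k (gen_ideal p k G)"
proof -
  let ?F = "{J. ideal_R p k J \<and> G \<subseteq> J}"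
  have ne: "carrierR k \<in> ?F" using assms carrier_ideal by blast
  show ?thesis unfolding gen_ideal_def
  proof (subst ideal_R_def, intro conjI ballI)
    show "\<Inter>?F \<subseteq> carrierR k" by (rule Inter_lower[OF ne])
    show "(\<lambda>_. 0) \<in> \<Inter>?F" using ideal_zero by blast
  next
    fix a b assume "a \<in> \<Inter>?F" "b \<in> \<Inter>?F" then show "addR a b \<in> \<Inter>?F" using ideal_add by blast
  next
    fix a assume "a \<in> \<Inter>?F" then show "smulR (-1) a \<in> \<Inter>?F" using ideal_neg by blast
  next
    fix r a assume "r \<in> carrierR k" "a \<in> \<Inter>?F" then show "mulR p k r a \<in> \<Inter>?F" unfolding ideal_R_def by blast
  qed
qed

lemma phi_mul:
  assumes "r \<in> carrierR i" "a \<in> carrierR i"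
  shows "phi p i (mulR p i r a) = phi p i r * phi p i a"
proof -
  have "phi p i (mulR p i r a) = (\<Sum>t\<le>i. (\<Sum>u\<le>i. \<Sum>v\<le>i.
      if min u v = t then r u * a v * p ^ (i - max u v) else 0) * p^(i-t))"
    unfolding phi_def mulR_def by (intro sum.cong) auto
  also have "\<dots> = (\<Sum>t\<le>i. \<Sum>u\<le>i. \<Sum>v\<le>i.
      if min u v = t then r u * a v * p ^ (i - max u v) * p^(i - min u v) else 0)"
    by (auto simp: sum_distrib_right intro!: sum.cong)
  also have "\<dots> = (\<Sum>u\<le>i. \<Sum>t\<le>i. \<Sum>v\<le>i.
      if min u v = t then r u * a v * p ^ (i - max u v) * p^(i - min u v) else 0)"
    by (rule sum.swap)
  also have "\<dots> = (\<Sum>u\<le>i. \<Sum>v\<le>i. \<Sum>t\<le>i.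
      if min u v = t then r u * a v * p ^ (i - max u v) * p^(i - min u v) else 0)"
    by (rule sum.cong[OF refl], rule sum.swap)
  also have "\<dots> = (\<Sum>u\<le>i. \<Sum>v\<le>i. r u * a v * p ^ (i - max u v) * p^(i - min u v))"
  proof (intro sum.cong refl)
    fix u v assume "u \<in> {..i}" "v \<in> {..i}"
    then have "min u v \<in> {..i}" by auto
    then show "(\<Sum>t\<le>i. if min u v = t then r u * a v * p ^ (i - max u v) * p^(i - min u v) else 0)
      = r u * a v * p ^ (i - max u v) * p^(i - min u v)"
      by (simp add: sum.delta)
  qed
  also have "\<dots> = (\<Sum>u\<le>i. \<Sum>v\<le>i. (r u * p^(i-u)) * (a v * p^(i-v)))"
  proof (intro sum.cong refl)
    fix u v assume "u \<in> {..i}" "v \<in> {..i}"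
    then have "(i - max u v) + (i - min u v) = (i-u) + (i-v)" by auto
    then have "p ^ (i - max u v) * p^(i - min u v) = p^(i-u) * p^(i-v)"
      by (metis power_add)
    then show "r u * a v * p ^ (i - max u v) * p^(i - min u v) = (r u * p^(i-u)) * (a v * p^(i-v))"
      by (simp add: algebra_simps)
  qed
  also have "\<dots> = phi p i r * phi p i a"
    unfolding phi_def by (simp add: sum_product)
  finally show ?thesis .
qed


lemma phi_add: "phi p i (addR a b) = phi p i a + phi p i b"
  by (simp add: phi_def addR_def sum.distrib algebra_simps)
lemma phi_smul: "phi p i (smulR c a) = c * phi p i a"
  by (simp add: phi_def smulR_def sum_distrib_left algebra_simps)

lemma Jset_ideal: "ideal_R p i (Jset p i x)"
  unfolding ideal_R_def Jset_def
proof (intro conjI ballI)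
  show "(\<lambda>_. 0) \<in> {a \<in> carrierR i. x dvd phi p i a}" by (simp add: carrierR_def phi_def)
next
  fix a b assume "a \<in> {a \<in> carrierR i. x dvd phi p i a}" "b \<in> {a \<in> carrierR i. x dvd phi p i a}"
  then show "addR a b \<in> {a \<in> carrierR i. x dvd phi p i a}"
    by (auto simp: carrierR_def addR_def phi_add[unfolded addR_def])
next
  fix a assume "a \<in> {a \<in> carrierR i. x dvd phi p i a}"
  then show "smulR (-1) a \<in> {a \<in> carrierR i. x dvd phi p i a}"
    using phi_smul[of p i "-1" a] by (auto simp: carrierR_def smulR_def)
next
  fix r a assume "r \<in> carrierR i" "a \<in> {a \<in> carrierR i. x dvd phi p i a}"
  then show "mulR p i r a \<in> {a \<in> carrierR i. x dvd phi p i a}"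
  proof (intro CollectI conjI)
    show "mulR p i r a \<in> carrierR i" by (simp add: carrierR_def mulR_def)
    have "a \<in> carrierR i" "x dvd phi p i a" using \<open>a \<in> _\<close> by auto
    then show "x dvd phi p i (mulR p i r a)" using phi_mul[OF \<open>r \<in> _\<close>] by simp
  qed
qed auto

lemma intR_carrier: "intR i x \<in> carrierR i"
  by (simp add: intR_def carrierR_def smulR_def Xb_def)
lemma Fel_carrier: "j \<le> i \<Longrightarrow> Fel p i j \<in> carrierR i"
  by (simp add: Fel_def intR_def carrierR_def smulR_def Xb_def addR_def)

lemma phi_intR: "phi p i (intR i x) = x"
proof -
  have "phi p i (intR i x) = (\<Sum>j\<le>i. if j = i then x else 0)"
    unfolding phi_def intR_def smulR_def Xb_def by (rule sum.cong) auto
  then show ?thesis by simp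
qed

lemma phi_Xb: assumes "j \<le> i" shows "phi p i (Xb i j) = p^(i-j)"
proof -
  have "phi p i (Xb i j) = (\<Sum>t\<le>i. if t = j then p^(i-j) else 0)"
    unfolding phi_def Xb_def by (rule sum.cong) auto
  then show ?thesis using assms by simp
qed

lemma phi_Fel: "j \<le> i \<Longrightarrow> phi p i (Fel p i j) = 0"
  by (simp add: Fel_def phi_add phi_Xb phi_intR)


lemma intR_apply: "intR i c t = (if t = i then c else 0)"
  by (simp add: intR_def smulR_def Xb_def)
lemma Xb_apply: "Xb i j t = (if t = j then 1 else 0)"
  by (simp add: Xb_def)
lemma Fel_apply: "Fel p i j t = (if t = j then 1 else 0) + (if t = i then - (p^(i-j)) else 0)"
  by (simp add: Fel_def addR_def intR_apply Xb_apply)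

lemma decomp:
  assumes "a \<in> carrierR i"
  shows "a = addR (\<lambda>t. \<Sum>j<i. smulR (a j) (Fel p i j) t) (intR i (phi p i a))"
proof
  fix t
  show "a t = addR (\<lambda>t. \<Sum>j<i. smulR (a j) (Fel p i j) t) (intR i (phi p i a)) t"
  proof (cases "t < i")
    case True
    have "(\<Sum>j<i. smulR (a j) (Fel p i j) t) = (\<Sum>j<i. if j = t then a t else 0)"
      by (rule sum.cong) (use True in \<open>auto simp: smulR_def Fel_apply\<close>)
    then show ?thesis using True by (simp add: addR_def intR_apply)
  next
    case False
    show ?thesis
    proof (cases "t = i")
      case True
      have "(\<Sum>j<i. smulR (a j) (Fel p i j) i) = (\<Sum>j<i. - (a j * p^(i-j)))"
        by (intro sum.cong refl) (auto simp: smulR_def Fel_apply)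
      moreover have "phi p i a = (\<Sum>j<i. a j * p^(i-j)) + a i"
        unfolding phi_def by (simp add: lessThan_Suc_atMost[symmetric])
      ultimately show ?thesis using True
        by (simp add: addR_def intR_apply sum_negf)
    next
      case False
      with \<open>\<not> t < i\<close> have "t > i" by simp
      then show ?thesis using assms
        by (simp add: addR_def smulR_def Fel_apply intR_apply carrierR_def)
    qed
  qed
qed


lemma GL:
  assumes K: "ideal_R p i K" and x: "intR i x \<in> K" and F: "\<And>j. j < i \<Longrightarrow> Fel p i j \<in> K"
  shows "Jset p i x \<subseteq> K"
proof
  fix a assume "a \<in> Jset p i x"
  then have ac: "a \<in> carrierR i" and d: "x dvd phi p i a" by (auto simp: Jset_def)
  from d obtain c where c: "phi p i a = x * c" by (auto elim: dvdE)
  have "intR i (phi p i a) = smulR c (intR i x)"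
    by (simp add: c intR_def smulR_def fun_eq_iff)
  then have "intR i (phi p i a) \<in> K" using ideal_smul[OF K x] by simp
  moreover have "(\<lambda>t. \<Sum>j<i. smulR (a j) (Fel p i j) t) \<in> K"
    by (rule ideal_sum[OF K]) (auto intro: ideal_smul[OF K] F)
  ultimately show "a \<in> K" using decomp[OF ac, of p] ideal_add[OF K] by metis
qed

lemma J0_eq: "J0 p i x = Jset p i x"
proof
  show "J0 p i x \<subseteq> Jset p i x"
    unfolding J0_def
    by (rule gen_ideal_least[OF Jset_ideal])
       (auto simp: Jset_def intR_carrier Fel_carrier phi_intR phi_Fel)
  show "Jset p i x \<subseteq> J0 p i x"
    unfolding J0_def gen_ideal_def
  proof (rule Inter_greatest)
    fix K assume "K \<in> {J. ideal_R p i J \<and> {intR i x} \<union> {Fel p i j |j. j < i} \<subseteq> J}"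
    then have K: "ideal_R p i K" "intR i x \<in> K" "\<And>j. j < i \<Longrightarrow> Fel p i j \<in> K" by auto
    show "Jset p i x \<subseteq> K" by (rule GL[OF K])
  qed
qed

lemma res_carrier: "resR p (Suc n) n x \<in> carrierR n"
  by (simp add: resR_def carrierR_def)

lemma phi_res: "phi p n (resR p (Suc n) n x) = phi p (Suc n) x"
proof -
  have ivl: "{n..Suc n} = {n, Suc n}" by auto
  have "phi p n (resR p (Suc n) n x) = (\<Sum>t<n. p * x t * p^(n-t)) + (x n * p + x (Suc n))"
    unfolding phi_def
    by (simp add: lessThan_Suc_atMost[symmetric] resR_def ivl)
  also have "(\<Sum>t<n. p * x t * p^(n-t)) = (\<Sum>t<n. x t * p^(Suc n-t))"
  proof (rule sum.cong[OF refl])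
    fix t assume "t \<in> {..<n}"
    then have "Suc n - t = Suc (n - t)" by auto
    then show "p * x t * p^(n-t) = x t * p^(Suc n-t)" by simp
  qed
  also have "(\<Sum>t<n. x t * p^(Suc n-t)) + (x n * p + x (Suc n)) = phi p (Suc n) x"
    unfolding phi_def by (simp add: lessThan_Suc_atMost[symmetric])
  finally show ?thesis .
qed

lemma Lop_Jset: "Lop p (Suc n) (Jset p n y) = Jset p (Suc n) y"
  unfolding Lop_def Jset_def using res_carrier phi_res by auto

lemma pZ_Jset: "pZ p = Jset p 0 p"
proof
  show "pZ p \<subseteq> Jset p 0 p"
    by (auto simp: pZ_def Jset_def intR_carrier phi_intR)
  show "Jset p 0 p \<subseteq> pZ p"
  proof
    fix a assume "a \<in> Jset p 0 p"
    then have c: "a \<in> carrierR 0" and "p dvd a 0" by (auto simp: Jset_def phi_def)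
    then obtain z where z: "a 0 = p * z" by (auto elim: dvdE)
    have "a = intR 0 (p * z)"
    proof
      fix t show "a t = intR 0 (p * z) t"
        using c z by (cases t) (auto simp: intR_apply carrierR_def)
    qed
    then show "a \<in> pZ p" by (auto simp: pZ_def)
  qed
qed

lemma Jset_sub: "Jset p i x \<subseteq> carrierR i" by (auto simp: Jset_def)

lemma dichotomy:
  assumes p: "prime p" and K: "ideal_R p i K"
    and lo: "Jset p i (p^(k+2)) \<subseteq> K" and hi: "K \<subseteq> Jset p i (p^(k+1))"
  shows "K = Jset p i (p^(k+2)) \<or> K = Jset p i (p^(k+1))"
proof (cases "K \<subseteq> Jset p i (p^(k+2))")
  case True then show ?thesis using lo by blast
next
  case False
  then obtain a where aK: "a \<in> K" and an: "a \<notin> Jset p i (p^(k+2))" by blast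
  have ac: "a \<in> carrierR i" and d1: "p^(k+1) dvd phi p i a" using hi aK by (auto simp: Jset_def)
  have d2: "\<not> p^(k+2) dvd phi p i a" using an ac by (auto simp: Jset_def)
  obtain u where u: "phi p i a = p^(k+1) * u" using d1 by (auto elim: dvdE)
  have pu: "\<not> p dvd u"
  proof
    assume "p dvd u" then obtain w where "u = p * w" by (auto elim: dvdE)
    then have "phi p i a = p^(k+2) * w" using u by (simp add: power_Suc algebra_simps)
    then show False using d2 by simp
  qed
  have Fin: "\<And>j. j < i \<Longrightarrow> Fel p i j \<in> K"
    using lo by (auto simp: Jset_def Fel_carrier phi_Fel)
  let ?b = "(\<lambda>t. \<Sum>j<i. smulR (a j) (Fel p i j) t)"
  have bK: "?b \<in> K" by (rule ideal_sum[OF K]) (auto intro: ideal_smul[OF K] Fin)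
  have "intR i (phi p i a) = addR a (smulR (-1) ?b)"
  proof
    fix t
    have "a t = addR ?b (intR i (phi p i a)) t" using decomp[OF ac, of p] by metis
    then show "intR i (phi p i a) t = addR a (smulR (-1) ?b) t" by (simp add: addR_def smulR_def)
  qed
  then have iK: "intR i (phi p i a) \<in> K" using ideal_add[OF K aK ideal_neg[OF K bK]] by simp
  have p2K: "intR i (p^(k+2)) \<in> K" using lo by (auto simp: Jset_def intR_carrier phi_intR)
  have "coprime u p" using p pu by (simp add: prime_imp_coprime coprime_commute)
  then have "gcd u p = 1" by simp
  then obtain s t where st: "s * u + t * p = 1"
    using bezout_int[of u p] by metis
  have eq: "p^(k+1) = s * (p^(k+1) * u) + t * p^(k+2)"
  proof -
    have "p^(k+1) * (s * u + t * p) = s * (p^(k+1) * u) + t * p^(k+2)"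
      by (simp add: algebra_simps power_Suc)
    then show ?thesis using st by simp
  qed
  have "intR i (p^(k+1)) = addR (smulR s (intR i (phi p i a))) (smulR t (intR i (p^(k+2))))"
    unfolding fun_eq_iff addR_def smulR_def intR_apply u using eq by auto
  then have "intR i (p^(k+1)) \<in> K"
    using ideal_add[OF K ideal_smul[OF K iK] ideal_smul[OF K p2K]] by simp
  then have "Jset p i (p^(k+1)) \<subseteq> K" using GL[OF K _ Fin] by blast
  then show ?thesis using hi by blast
qed


lemma sum_two:
  assumes "t \<le> m" "\<And>s. s < m \<Longrightarrow> g s = (0::int)"
  shows "(\<Sum>s\<in>{t..Suc m}. g s) = g m + g (Suc m)"
proof -
  have e: "{t..Suc m} = {t..<m} \<union> {m, Suc m}" using assms(1) by auto
  have "(\<Sum>s\<in>{t..Suc m}. g s) = (\<Sum>s\<in>{t..<m}. g s) + (\<Sum>s\<in>{m, Suc m}. g s)"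
    unfolding e by (rule sum.union_disjoint) auto
  also have "(\<Sum>s\<in>{t..<m}. g s) = 0" using assms(2) by (intro sum.neutral) auto
  finally show ?thesis by simp
qed

lemma arith1:
  fixes p :: int assumes "p \<noteq> 0" "np \<ge> 2"
  shows "((-p)^np - (-p)) div p + (-1)^np * p^(np-2) * (-p) = 1"
proof -
  obtain q where q: "np = Suc (Suc q)" using assms(2) by (metis add_2_eq_Suc le_Suc_ex)
  have e1: "(-p)^np = (-1)^np * p^np" by (rule power_minus)
  have e2: "p^np = p * p^(Suc q)" unfolding q by (rule power_Suc)
  have e3: "np - 2 = q" using q by simp
  have "(-p)^np - (-p) = p * ((-1)^np * p^(Suc q) + 1)"
    unfolding e1 e2 by (simp add: algebra_simps)
  then have "((-p)^np - (-p)) div p = (-1)^np * p^(Suc q) + 1" using assms(1) by simp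
  then show ?thesis unfolding e3 by (simp add: algebra_simps)
qed

lemma arith2:
  fixes p :: int assumes "p \<noteq> 0" "np \<ge> 2"
  shows "(0 ^ np - (-p)^np) div p^2 + (-1)^np * p^(np-2) = 0"
proof -
  obtain q where q: "np = Suc (Suc q)" using assms(2) by (metis add_2_eq_Suc le_Suc_ex)
  have e1: "(-p)^np = (-1)^np * p^np" by (rule power_minus)
  have e2: "p^np = p^2 * p^q" unfolding q by (simp add: power2_eq_square)
  have e3: "np - 2 = q" using q by simp
  have z: "(0::int) ^ np = 0" using q by simp
  define c where "c = - ((-1)^np * p^q)"
  have "(0 ^ np - (-p)^np) = p^2 * c"
    unfolding e1 e2 z c_def by (simp add: algebra_simps)
  then have "(0 ^ np - (-p)^np) div p^2 = c" using assms(1) by simp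
  then show ?thesis unfolding e3 c_def by simp
qed

lemma arith3:
  fixes p :: int assumes "p \<noteq> 0" "np \<ge> 2"
  shows "p^(np-2) * p - (p^np - p) div p = 1"
proof -
  obtain q where q: "np = Suc (Suc q)" using assms(2) by (metis add_2_eq_Suc le_Suc_ex)
  have e2: "p^np = p * p^(Suc q)" unfolding q by (rule power_Suc)
  have e3: "np - 2 = q" using q by simp
  have "p^np - p = p * (p^(Suc q) - 1)" unfolding e2 by (simp add: algebra_simps)
  then have "(p^np - p) div p = p^(Suc q) - 1" using assms(1) by simp
  then show ?thesis unfolding e3 by (simp add: algebra_simps)
qed
lemma Ftop0:
  fixes p :: int assumes "prime p"
  shows "Fel p 1 0 = addR (smulR (p^(nat p - 2)) (indR 1 0 (intR 0 p))) (smulR (-1) (jndR p 1 0 (intR 0 p)))"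
proof
  fix t
  have p0: "p \<noteq> 0" and np: "nat p \<ge> 2" using prime_ge_2_int[OF assms] by auto
  show "Fel p 1 0 t = addR (smulR (p^(nat p - 2)) (indR 1 0 (intR 0 p))) (smulR (-1) (jndR p 1 0 (intR 0 p))) t"
  proof (cases "t = 0")
    case True
    then show ?thesis using arith3[OF p0 np]
      by (simp add: Fel_apply addR_def smulR_def indR_def intR_apply jndR_def)
  next
    case False
    then show ?thesis
      by (simp add: Fel_apply addR_def smulR_def indR_def intR_apply jndR_def)
  qed
qed

lemma FtopS:
  fixes p :: int assumes "prime p"
  shows "Fel p (Suc (Suc m)) (Suc m) = addR (jndR p (Suc (Suc m)) (Suc m) (Fel p (Suc m) m))
     (smulR ((-1)^(nat p) * p^(nat p - 2)) (indR (Suc (Suc m)) (Suc m) (Fel p (Suc m) m)))"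
proof
  fix t
  have p0: "p \<noteq> 0" and np: "nat p \<ge> 2" using prime_ge_2_int[OF assms] by auto
  let ?x = "Fel p (Suc m) m"
  have xv: "?x s = (if s = m then 1 else if s = Suc m then -p else 0)" for s
    by (simp add: Fel_apply)
  let ?g = "\<lambda>s. ?x s * p ^ (Suc m - s)"
  have g0: "\<And>s. s < m \<Longrightarrow> ?g s = 0" by (simp add: xv)
  have S1: "t \<le> m \<Longrightarrow> (\<Sum>s\<in>{t..Suc m}. ?g s) = 0"
    using sum_two[of t m ?g, OF _ g0] by (simp add: xv)
  have S2: "t < m \<Longrightarrow> (\<Sum>s\<in>{Suc t..Suc m}. ?g s) = 0"
    using sum_two[of "Suc t" m ?g, OF _ g0] by (simp add: xv)
  have S3: "(\<Sum>s\<in>{Suc m..Suc m}. ?g s) = -p" by (simp add: xv)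
  show "Fel p (Suc (Suc m)) (Suc m) t = addR (jndR p (Suc (Suc m)) (Suc m) ?x)
     (smulR ((-1)^(nat p) * p^(nat p - 2)) (indR (Suc (Suc m)) (Suc m) ?x)) t"
  proof (cases "t < m")
    case True
    then show ?thesis using S1 S2
      by (simp add: Fel_apply addR_def smulR_def indR_def jndR_def)
  next
    case f1: False
    show ?thesis
    proof (cases "t = m")
      case True
      then show ?thesis using S1 S3 arith2[OF p0 np]
        by (simp add: Fel_apply addR_def smulR_def indR_def jndR_def)
    next
      case f2: False
      show ?thesis
      proof (cases "t = Suc m")
        case True
        then show ?thesis using arith1[OF p0 np]
          by (simp add: Fel_apply addR_def smulR_def indR_def jndR_def)
      next
        case False
        then show ?thesis using f1 f2
          by (simp add: Fel_apply addR_def smulR_def indR_def jndR_def)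
      qed
    qed
  qed
qed
lemma Fel_ind:
  assumes "j < n"
  shows "Fel p (Suc n) j = addR (indR (Suc n) n (Fel p n j)) (smulR (p^(n-j)) (Fel p (Suc n) n))"
proof
  fix t
  have e: "Suc n - j = Suc (n - j)" using assms by simp
  show "Fel p (Suc n) j t = addR (indR (Suc n) n (Fel p n j)) (smulR (p^(n-j)) (Fel p (Suc n) n)) t"
    using assms by (auto simp: Fel_apply addR_def smulR_def indR_def e)
qed

lemma int_ind:
  "intR (Suc n) (p^(k+2)) = addR (indR (Suc n) n (intR n (p^(k+1)))) (smulR (-(p^(k+1))) (Fel p (Suc n) n))"
proof
  fix t
  show "intR (Suc n) (p^(k+2)) t = addR (indR (Suc n) n (intR n (p^(k+1)))) (smulR (-(p^(k+1))) (Fel p (Suc n) n)) t"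
    by (auto simp: Fel_apply addR_def smulR_def indR_def intR_apply power_Suc)
qed

lemma S_gen:
  assumes p: "prime p" and K: "ideal_R p (Suc n) K"
    and ind: "indR (Suc n) n ` Jset p n (p^(k+1)) \<subseteq> K"
    and jnd: "jndR p (Suc n) n ` Jset p n (p^(k+1)) \<subseteq> K"
    and k: "k \<le> n"
  shows "Jset p (Suc n) (p^(k+2)) \<subseteq> K"
proof -
  have Ftop: "Fel p (Suc n) n \<in> K"
  proof (cases n)
    case 0
    then have k0: "k = 0" using k by simp
    have xJ: "intR 0 p \<in> Jset p 0 (p^(k+1))" using k0 by (simp add: Jset_def intR_carrier phi_intR)
    have a: "indR 1 0 (intR 0 p) \<in> K" "jndR p 1 0 (intR 0 p) \<in> K" using ind jnd xJ 0 by auto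
    have "addR (smulR (p^(nat p - 2)) (indR 1 0 (intR 0 p))) (smulR (-1) (jndR p 1 0 (intR 0 p))) \<in> K"
      using K 0 a by (intro ideal_add[OF K] ideal_smul[OF K]) auto
    then show ?thesis using Ftop0[OF p] 0 by simp
  next
    case (Suc m)
    have xJ: "Fel p (Suc m) m \<in> Jset p n (p^(k+1))" using Suc by (simp add: Jset_def Fel_carrier phi_Fel)
    have a: "indR (Suc (Suc m)) (Suc m) (Fel p (Suc m) m) \<in> K"
      "jndR p (Suc (Suc m)) (Suc m) (Fel p (Suc m) m) \<in> K" using ind jnd xJ Suc by auto
    have "addR (jndR p (Suc (Suc m)) (Suc m) (Fel p (Suc m) m))
     (smulR ((-1)^(nat p) * p^(nat p - 2)) (indR (Suc (Suc m)) (Suc m) (Fel p (Suc m) m))) \<in> K"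
      using a by (intro ideal_add[OF K] ideal_smul[OF K]) auto
    then show ?thesis using FtopS[OF p] Suc by simp
  qed
  have Fall: "Fel p (Suc n) j \<in> K" if "j < Suc n" for j
  proof (cases "j = n")
    case True then show ?thesis using Ftop by simp
  next
    case False
    then have jn: "j < n" using that by simp
    have "Fel p n j \<in> Jset p n (p^(k+1))" using jn by (simp add: Jset_def Fel_carrier phi_Fel)
    then have "indR (Suc n) n (Fel p n j) \<in> K" using ind by auto
    then show ?thesis using Fel_ind[OF jn, of p] ideal_add[OF K _ ideal_smul[OF K Ftop]] by metis
  qed
  have "intR n (p^(k+1)) \<in> Jset p n (p^(k+1))" by (simp add: Jset_def intR_carrier phi_intR)
  then have "indR (Suc n) n (intR n (p^(k+1))) \<in> K" using ind by auto
  then have "intR (Suc n) (p^(k+2)) \<in> K"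
    using int_ind[of n p k] ideal_add[OF K _ ideal_smul[OF K Ftop]] by metis
  then show ?thesis using GL[OF K _ Fall] by blast
qed
lemma step:
  assumes p: "prime p" and om: "omega_ideal p l I" and i: "Suc n \<le> l"
    and hyp: "I n = Jset p n (p^(k+1))" and k: "k \<le> n"
  shows "(I (Suc n) = Jset p (Suc n) (p^(k+2)) \<and> I (Suc n) = Sop p (Suc n) (I n)) \<or>
         (I (Suc n) = Jset p (Suc n) (p^(k+1)) \<and> I (Suc n) = Lop p (Suc n) (I n))"
proof -
  have K: "ideal_R p (Suc n) (I (Suc n))" using om i by (auto simp: omega_ideal_def)
  have "Suc n \<in> {1..l}" using i by simp
  then have ind: "indR (Suc n) n ` I n \<subseteq> I (Suc n)"
    and res: "resR p (Suc n) n ` I (Suc n) \<subseteq> I n"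
    and jnd: "jndR p (Suc n) n ` I n \<subseteq> I (Suc n)"
    using om unfolding omega_ideal_def by (metis diff_Suc_1)+
  have lo: "Jset p (Suc n) (p^(k+2)) \<subseteq> I (Suc n)"
    using S_gen[OF p K _ _ k] ind jnd hyp by simp
  have hi: "I (Suc n) \<subseteq> Jset p (Suc n) (p^(k+1))"
  proof
    fix x assume x: "x \<in> I (Suc n)"
    then have "x \<in> carrierR (Suc n)" using K by (auto simp: ideal_R_def)
    moreover have "resR p (Suc n) n x \<in> Jset p n (p^(k+1))" using res x hyp by auto
    ultimately have "x \<in> Lop p (Suc n) (Jset p n (p^(k+1)))" by (simp add: Lop_def)
    then show "x \<in> Jset p (Suc n) (p^(k+1))" by (simp add: Lop_Jset)
  qed
  from dichotomy[OF p K lo hi] show ?thesis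
  proof
    assume e: "I (Suc n) = Jset p (Suc n) (p^(k+2))"
    let ?G = "indR (Suc n) (Suc n - 1) ` I n \<union> jndR p (Suc n) (Suc n - 1) ` I n"
    have G: "?G \<subseteq> I (Suc n)" using ind jnd by simp
    have Gc: "?G \<subseteq> carrierR (Suc n)" using G K by (auto simp: ideal_R_def)
    have "Sop p (Suc n) (I n) \<subseteq> I (Suc n)"
      unfolding Sop_def by (rule gen_ideal_least[OF K G])
    moreover have "I (Suc n) \<subseteq> Sop p (Suc n) (I n)"
    proof -
      have SK: "ideal_R p (Suc n) (Sop p (Suc n) (I n))"
        unfolding Sop_def by (rule gen_ideal_ideal[OF Gc])
      have "?G \<subseteq> Sop p (Suc n) (I n)" unfolding Sop_def by (rule gen_ideal_gen)
      then have "indR (Suc n) n ` Jset p n (p^(k+1)) \<subseteq> Sop p (Suc n) (I n)"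
        "jndR p (Suc n) n ` Jset p n (p^(k+1)) \<subseteq> Sop p (Suc n) (I n)" using hyp by auto
      from S_gen[OF p SK this k] show ?thesis using e by simp
    qed
    ultimately show ?thesis using e by blast
  next
    assume e: "I (Suc n) = Jset p (Suc n) (p^(k+1))"
    then show ?thesis using hyp by (simp add: Lop_Jset)
  qed
qed

lemma allJ:
  assumes p: "prime p" and om: "omega_ideal p l I" and I0: "I 0 = pZ p"
  shows "n \<le> l \<Longrightarrow> \<exists>k\<le>n. I n = Jset p n (p^(k+1))"
proof (induction n)
  case 0
  then show ?case using I0 pZ_Jset by auto
next
  case (Suc n)
  then obtain k where k: "k \<le> n" "I n = Jset p n (p^(k+1))" by auto
  from step[OF p om Suc(2) k(2) k(1)] show ?case
  proof
    assume "I (Suc n) = Jset p (Suc n) (p^(k+2)) \<and> I (Suc n) = Sop p (Suc n) (I n)"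
    then show ?thesis using k(1) by (intro exI[of _ "Suc k"]) (simp add: numeral_2_eq_2)
  next
    assume "I (Suc n) = Jset p (Suc n) (p^(k+1)) \<and> I (Suc n) = Lop p (Suc n) (I n)"
    then show ?thesis using k(1) by (intro exI[of _ k]) simp
  qed
qed

theorem corollary6:
  fixes p :: int and r l :: nat and I :: "nat \<Rightarrow> elt set"
  assumes "prime p" and "1 \<le> l" and "l \<le> r"
    and "omega_ideal p l I" and "I 0 = pZ p"
  shows "\<forall>i\<in>{1..l}. (I i = Sop p i (I (i-1)) \<or> I i = Lop p i (I (i-1))) \<and>
            (\<exists>k\<le>i. I i = J0 p i (p ^ (k+1)))"
proof
  fix i assume "i \<in> {1..l}"
  then have "i = Suc (i - 1)" "Suc (i-1) \<le> l" by auto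
  then obtain n where n: "i = Suc n" "Suc n \<le> l" by blast
  then obtain k where k: "k \<le> n" "I n = Jset p n (p^(k+1))"
    using allJ[OF assms(1,4,5), of n] by auto
  from step[OF assms(1,4) n(2) k(2) k(1)]
  show "(I i = Sop p i (I (i-1)) \<or> I i = Lop p i (I (i-1))) \<and> (\<exists>k\<le>i. I i = J0 p i (p ^ (k+1)))"
  proof
    assume h: "I (Suc n) = Jset p (Suc n) (p^(k+2)) \<and> I (Suc n) = Sop p (Suc n) (I n)"
    have "I i = J0 p i (p ^ (Suc k+1))" using h n by (simp add: J0_eq numeral_2_eq_2)
    then show ?thesis using h n k(1) by (metis Suc_le_mono diff_Suc_1)
  next
    assume h: "I (Suc n) = Jset p (Suc n) (p^(k+1)) \<and> I (Suc n) = Lop p (Suc n) (I n)"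
    have "I i = J0 p i (p ^ (k+1))" using h n by (simp add: J0_eq)
    then show ?thesis using h n k(1) by (metis le_SucI diff_Suc_1)
  qed
qed
end
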